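(* Let $G$ be a weighted graph. Let $F$ be a bipartite graph and let $\mathcal{H}$ be the class of all graphs that are weighted cross-bipartite swapping in $G$. Then every $\mathcal{H}$-blow-up $H$ of $F$ is bipartite swapping in $G$, i.e. $\hom(H,G)^2\le\hom(H\times K_2,G)$.
   Context: A weighted graph $G$ is a symmetric function $G:V(G)\times V(G)\to\mathbb{R}_{\ge0}$ on a finite set (loops allowed). For a graph $H$, $\hom(H,G)=\sum_{\phi:V(H)\to V(G)}\prod_{uv\in E(H)}G(\phi(u),\phi(v))$. The tensor product $H\times K_2$ has vertex set $V(H)\times\{1,2\}$ with $(u,i)\sim(v,j)$ iff $uv\in E(H)$ and $i\ne j$. A graph $H$ is weighted cross-bipartite swapping in $G$ if for all $\mathbf{a},\mathbf{b}:V(G)\to\mathbb{R}_{\ge0}$, \[\Big(\sum_{\phi:V(H)\to V(G)}\prod_{uv\in E(H)}G(\phi(u),\phi(v))\prod_{u}a_{\phi(u)}\Big)\Big(\sum_{\phi:V(H)\to V(G)}\prod_{uv\in E(H)}G(\phi(u),\phi(v))\prod_{u}b_{\phi(u)}\Big)\le \sum_{\psi:V(H)\times\{1,2\}\to V(G)}\prod_{xy\in E(H\times K_2)}G(\psi(x),\psi(y))\prod_{u\in V(H)}a_{\psi(u,1)}b_{\psi(u,2)}.\] For a class $\mathcal{H}$ and a graph $F$ on vertices $v_1,\dots,v_k$, an $\mathcal{H}$-blow-up of $F$ is obtained by choosing $H_1,\dots,H_k\in\mathcal{H}$, taking their disjoint union, and adding all edges between $V(H_i)$ and $V(H_j)$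 whenever $v_iv_j\in E(F)$. *)

theory Defs
  imports Complex_Main "HOL-Library.FuncSet"
begin

definition graph :: "'v set \<Rightarrow> 'v set set \<Rightarrow> bool" where
  "graph V E \<longleftrightarrow> finite V \<and> (\<forall>e\<in>E. e \<subseteq> V \<and> card e = 2)"

definition weighted_graph :: "('g::finite \<Rightarrow> 'g \<Rightarrow> real) \<Rightarrow> bool" where
  "weighted_graph G \<longleftrightarrow> (\<forall>x y. G x y = G y x) \<and> (\<forall>x y. 0 \<le> G x y)"

definition edge_val :: "('g \<Rightarrow> 'g \<Rightarrow> real) \<Rightarrow> ('v \<Rightarrow> 'g) \<Rightarrow> 'v set \<Rightarrow> real" where
  "edge_val G \<phi> e = (THE w. \<exists>u v. u \<noteq> v \<and> e = {u, v} \<and> w = G (\<phi> u) (\<phi> v))"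

definition hom_w :: "'v set \<Rightarrow> 'v set set \<Rightarrow> ('g::finite \<Rightarrow> 'g \<Rightarrow> real) \<Rightarrow> ('g \<Rightarrow> real) \<Rightarrow> real" where
  "hom_w V E G a = (\<Sum>\<phi> \<in> V \<rightarrow>\<^sub>E (UNIV::'g set). (\<Prod>e\<in>E. edge_val G \<phi> e) * (\<Prod>u\<in>V. a (\<phi> u)))"

definition hom :: "'v set \<Rightarrow> 'v set set \<Rightarrow> ('g::finite \<Rightarrow> 'g \<Rightarrow> real) \<Rightarrow> real" where
  "hom V E G = (\<Sum>\<phi> \<in> V \<rightarrow>\<^sub>E (UNIV::'g set). (\<Prod>e\<in>E. edge_val G \<phi> e))"

text \<open>Tensor product H x K2, with V(K2) = bool (True = 1, False = 2).\<close>
definition tensorK2_V :: "'v set \<Rightarrow> ('v \<times> bool) set" where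
  "tensorK2_V V = V \<times> (UNIV::bool set)"

definition tensorK2_E :: "'v set set \<Rightarrow> ('v \<times> bool) set set" where
  "tensorK2_E E = {{(u, i), (v, j)} | u v i j. {u, v} \<in> E \<and> i \<noteq> j}"

definition hom_cross :: "'v set \<Rightarrow> 'v set set \<Rightarrow> ('g::finite \<Rightarrow> 'g \<Rightarrow> real) \<Rightarrow> ('g \<Rightarrow> real) \<Rightarrow> ('g \<Rightarrow> real) \<Rightarrow> real" where
  "hom_cross V E G a b = (\<Sum>\<psi> \<in> tensorK2_V V \<rightarrow>\<^sub>E (UNIV::'g set).
      (\<Prod>e\<in>tensorK2_E E. edge_val G \<psi> e) * (\<Prod>u\<in>V. a (\<psi> (u, True)) * b (\<psi> (u, False))))"

definition wcb_swapping :: "'v set \<Rightarrow> 'v set set \<Rightarrow> ('g::finite \<Rightarrow> 'g \<Rightarrow> real) \<Rightarrow> bool" where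
  "wcb_swapping V E G \<longleftrightarrow> (\<forall>a b. (\<forall>x. 0 \<le> a x) \<longrightarrow> (\<forall>x. 0 \<le> b x) \<longrightarrow>
       hom_w V E G a * hom_w V E G b \<le> hom_cross V E G a b)"

definition bipartite_swapping :: "'v set \<Rightarrow> 'v set set \<Rightarrow> ('g::finite \<Rightarrow> 'g \<Rightarrow> real) \<Rightarrow> bool" where
  "bipartite_swapping V E G \<longleftrightarrow> (hom V E G)\<^sup>2 \<le> hom (tensorK2_V V) (tensorK2_E E) G"

definition bipartite :: "'v set \<Rightarrow> 'v set set \<Rightarrow> bool" where
  "bipartite V E \<longleftrightarrow> (\<exists>A \<subseteq> V. \<forall>e\<in>E. card (e \<inter> A) = 1)"

definition blowup_V :: "'f set \<Rightarrow> ('f \<Rightarrow> 'h set) \<Rightarrow> ('f \<times> 'h) set" where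
  "blowup_V VF HV = Sigma VF HV"

definition blowup_E :: "'f set \<Rightarrow> 'f set set \<Rightarrow> ('f \<Rightarrow> 'h set) \<Rightarrow> ('f \<Rightarrow> 'h set set) \<Rightarrow> ('f \<times> 'h) set set" where
  "blowup_E VF EF HV HE =
     {{(i, x), (i, y)} | i x y. i \<in> VF \<and> {x, y} \<in> HE i}
   \<union> {{(i, x), (j, y)} | i j x y. {i, j} \<in> EF \<and> x \<in> HV i \<and> y \<in> HV j}"

end

theory Submission
  imports Defs
begin

lemma sum_PiE_insert:
  assumes "k \<notin> I"
  shows "(\<Sum>\<alpha>\<in>PiE (insert k I) M. g \<alpha>) = (\<Sum>p\<in>M k. \<Sum>\<gamma>\<in>PiE I M. g (\<gamma>(k:=p)))"
proof -
  have inj: "inj_on (\<lambda>(y, h). h(k := y)) (M k \<times> PiE I M)"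
  proof (rule inj_onI, clarsimp)
    fix y h y' h'
    assume h: "h \<in> PiE I M" "h' \<in> PiE I M" and eq: "h(k := y) = h'(k := y')"
    have "y = y'" using fun_cong[OF eq, of k] by simp
    moreover have "h = h'"
    proof
      fix x show "h x = h' x"
      proof (cases "x = k")
        case True then show ?thesis using h assms by (auto simp: PiE_def extensional_def)
      next
        case False then show ?thesis using fun_cong[OF eq, of x] by simp
      qed
    qed
    ultimately show "y = y' \<and> h = h'" by simp
  qed
  show ?thesis
    unfolding PiE_insert_eq sum.reindex[OF inj] sum.cartesian_product by (simp add: case_prod_beta)
qed

lemma hybrid_aux:
  fixes f :: "'i \<Rightarrow> 'm \<Rightarrow> real" and X :: "'i \<Rightarrow> 'n \<Rightarrow> real"
    and p1 p2 :: "'i \<Rightarrow> 'n \<Rightarrow> 'm"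
  assumes "finite I"
  shows "\<forall>C::('i \<Rightarrow> 'm) \<Rightarrow> real.
     (\<forall>i\<in>I. finite (M i)) \<longrightarrow> (\<forall>i\<in>I. finite (N i)) \<longrightarrow>
     (\<forall>i\<in>I. \<forall>p\<in>M i. 0 \<le> f i p) \<longrightarrow> (\<forall>i\<in>I. \<forall>q\<in>N i. 0 \<le> X i q) \<longrightarrow>
     (\<forall>i\<in>I. \<forall>\<alpha> \<beta>. (\<Sum>p\<in>M i. f i p * C (\<alpha>(i:=p))) * (\<Sum>p\<in>M i. f i p * C (\<beta>(i:=p)))
        \<le> (\<Sum>q\<in>N i. X i q * C (\<alpha>(i:=p1 i q)) * C (\<beta>(i:=p2 i q)))) \<longrightarrow>
     (\<Sum>\<alpha>\<in>PiE I M. (\<Prod>i\<in>I. f i (\<alpha> i)) * C \<alpha>)\<^sup>2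
       \<le> (\<Sum>\<psi>\<in>PiE I N. (\<Prod>i\<in>I. X i (\<psi> i)) * C (\<lambda>i\<in>I. p1 i (\<psi> i)) * C (\<lambda>i\<in>I. p2 i (\<psi> i)))"
  using assms
proof (induction I rule: finite_induct)
  case empty
  then show ?case by (simp add: power2_eq_square restrict_def)
next
  case (insert k I)
  show ?case
  proof (intro allI impI)
    fix C :: "('i \<Rightarrow> 'm) \<Rightarrow> real"
    assume finM: "\<forall>i\<in>insert k I. finite (M i)" and finN: "\<forall>i\<in>insert k I. finite (N i)"
      and fnn: "\<forall>i\<in>insert k I. \<forall>p\<in>M i. 0 \<le> f i p" and Xnn: "\<forall>i\<in>insert k I. \<forall>q\<in>N i. 0 \<le> X i q"
      and sw: "\<forall>i\<in>insert k I. \<forall>\<alpha> \<beta>. (\<Sum>p\<in>M i. f i p * C (\<alpha>(i:=p))) * (\<Sum>p\<in>M i. f i p * C (\<beta>(i:=p)))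
        \<le> (\<Sum>q\<in>N i. X i q * C (\<alpha>(i:=p1 i q)) * C (\<beta>(i:=p2 i q)))"
    define C' where "C' \<gamma> = (\<Sum>s\<in>M k. f k s * C (\<gamma>(k:=s)))" for \<gamma>
    have L: "(\<Sum>\<alpha>\<in>PiE (insert k I) M. (\<Prod>i\<in>insert k I. f i (\<alpha> i)) * C \<alpha>)
        = (\<Sum>\<gamma>\<in>PiE I M. (\<Prod>i\<in>I. f i (\<gamma> i)) * C' \<gamma>)"
    proof -
      have "(\<Sum>\<alpha>\<in>PiE (insert k I) M. (\<Prod>i\<in>insert k I. f i (\<alpha> i)) * C \<alpha>)
         = (\<Sum>p\<in>M k. \<Sum>\<gamma>\<in>PiE I M. (\<Prod>i\<in>insert k I. f i ((\<gamma>(k:=p)) i)) * C (\<gamma>(k:=p)))"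
        by (rule sum_PiE_insert[OF insert(2)])
      also have "\<dots> = (\<Sum>p\<in>M k. \<Sum>\<gamma>\<in>PiE I M. (\<Prod>i\<in>I. f i (\<gamma> i)) * (f k p * C (\<gamma>(k:=p))))"
      proof (intro sum.cong refl)
        fix p \<gamma>
        have "(\<Prod>i\<in>insert k I. f i ((\<gamma>(k:=p)) i)) = f k p * (\<Prod>i\<in>I. f i ((\<gamma>(k:=p)) i))"
          using insert(1,2) by simp
        also have "(\<Prod>i\<in>I. f i ((\<gamma>(k:=p)) i)) = (\<Prod>i\<in>I. f i (\<gamma> i))"
          using insert(2) by (intro prod.cong) auto
        finally show "(\<Prod>i\<in>insert k I. f i ((\<gamma>(k:=p)) i)) * C (\<gamma>(k:=p)) = (\<Prod>i\<in>I. f i (\<gamma> i)) * (f k p * C (\<gamma>(k:=p)))"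
          by simp
      qed
      also have "\<dots> = (\<Sum>\<gamma>\<in>PiE I M. (\<Prod>i\<in>I. f i (\<gamma> i)) * C' \<gamma>)"
        by (subst sum.swap) (simp add: C'_def sum_distrib_left)
      finally show ?thesis .
    qed
    have sw': "\<forall>i\<in>I. \<forall>\<alpha> \<beta>. (\<Sum>p\<in>M i. f i p * C' (\<alpha>(i:=p))) * (\<Sum>p\<in>M i. f i p * C' (\<beta>(i:=p)))
        \<le> (\<Sum>q\<in>N i. X i q * C' (\<alpha>(i:=p1 i q)) * C' (\<beta>(i:=p2 i q)))"
    proof (intro ballI allI)
      fix i \<alpha> \<beta> assume i: "i \<in> I"
      with insert(2) have ik: "i \<noteq> k" by auto
      have e1: "(\<Sum>p\<in>M i. f i p * C' (\<gamma>(i:=p))) = (\<Sum>s\<in>M k. f k s * (\<Sum>p\<in>M i. f i p * C ((\<gamma>(k:=s))(i:=p))))" for \<gamma>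
      proof -
        have tw: "\<gamma>(i:=p, k:=s) = \<gamma>(k:=s, i:=p)" for p s using ik by (rule fun_upd_twist)
        show ?thesis unfolding C'_def tw sum_distrib_left
          by (subst sum.swap) (simp add: algebra_simps)
      qed
      have e2: "(\<Sum>q\<in>N i. X i q * C' (\<alpha>(i:=p1 i q)) * C' (\<beta>(i:=p2 i q)))
         = (\<Sum>s\<in>M k. \<Sum>t\<in>M k. f k s * f k t * (\<Sum>q\<in>N i. X i q * C ((\<alpha>(k:=s))(i:=p1 i q)) * C ((\<beta>(k:=t))(i:=p2 i q))))"
      proof -
        have tw: "\<gamma>(i:=p, k:=s) = \<gamma>(k:=s, i:=p)" for \<gamma> p s using ik by (rule fun_upd_twist)
        have "(\<Sum>q\<in>N i. X i q * C' (\<alpha>(i:=p1 i q)) * C' (\<beta>(i:=p2 i q)))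
          = (\<Sum>q\<in>N i. \<Sum>s\<in>M k. \<Sum>t\<in>M k. f k s * f k t * (X i q * C ((\<alpha>(k:=s))(i:=p1 i q)) * C ((\<beta>(k:=t))(i:=p2 i q))))"
          unfolding C'_def tw by (simp add: sum_distrib_left sum_distrib_right algebra_simps)
        also have "\<dots> = (\<Sum>s\<in>M k. \<Sum>q\<in>N i. \<Sum>t\<in>M k. f k s * f k t * (X i q * C ((\<alpha>(k:=s))(i:=p1 i q)) * C ((\<beta>(k:=t))(i:=p2 i q))))"
          by (rule sum.swap)
        also have "\<dots> = (\<Sum>s\<in>M k. \<Sum>t\<in>M k. \<Sum>q\<in>N i. f k s * f k t * (X i q * C ((\<alpha>(k:=s))(i:=p1 i q)) * C ((\<beta>(k:=t))(i:=p2 i q))))"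
          by (rule sum.cong[OF refl], rule sum.swap)
        also have "\<dots> = (\<Sum>s\<in>M k. \<Sum>t\<in>M k. f k s * f k t * (\<Sum>q\<in>N i. X i q * C ((\<alpha>(k:=s))(i:=p1 i q)) * C ((\<beta>(k:=t))(i:=p2 i q))))"
          by (simp add: sum_distrib_left)
        finally show ?thesis .
      qed
      have "(\<Sum>p\<in>M i. f i p * C' (\<alpha>(i:=p))) * (\<Sum>p\<in>M i. f i p * C' (\<beta>(i:=p)))
         = (\<Sum>s\<in>M k. \<Sum>t\<in>M k. f k s * f k t * ((\<Sum>p\<in>M i. f i p * C ((\<alpha>(k:=s))(i:=p))) * (\<Sum>p\<in>M i. f i p * C ((\<beta>(k:=t))(i:=p)))))"
        unfolding e1 by (subst sum_product) (simp add: algebra_simps)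
      also have "\<dots> \<le> (\<Sum>s\<in>M k. \<Sum>t\<in>M k. f k s * f k t * (\<Sum>q\<in>N i. X i q * C ((\<alpha>(k:=s))(i:=p1 i q)) * C ((\<beta>(k:=t))(i:=p2 i q))))"
      proof (intro sum_mono mult_left_mono)
        fix s t assume "s \<in> M k" "t \<in> M k"
        then show "0 \<le> f k s * f k t" using fnn by simp
        show "(\<Sum>p\<in>M i. f i p * C ((\<alpha>(k:=s))(i:=p))) * (\<Sum>p\<in>M i. f i p * C ((\<beta>(k:=t))(i:=p)))
          \<le> (\<Sum>q\<in>N i. X i q * C ((\<alpha>(k:=s))(i:=p1 i q)) * C ((\<beta>(k:=t))(i:=p2 i q)))"
          using sw i by blast
      qed
      also have "\<dots> = (\<Sum>q\<in>N i. X i q * C' (\<alpha>(i:=p1 i q)) * C' (\<beta>(i:=p2 i q)))"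
        using e2 by simp
      finally show "(\<Sum>p\<in>M i. f i p * C' (\<alpha>(i:=p))) * (\<Sum>p\<in>M i. f i p * C' (\<beta>(i:=p)))
        \<le> (\<Sum>q\<in>N i. X i q * C' (\<alpha>(i:=p1 i q)) * C' (\<beta>(i:=p2 i q)))" .
    qed
    have IH: "(\<Sum>\<gamma>\<in>PiE I M. (\<Prod>i\<in>I. f i (\<gamma> i)) * C' \<gamma>)\<^sup>2
       \<le> (\<Sum>\<psi>\<in>PiE I N. (\<Prod>i\<in>I. X i (\<psi> i)) * C' (\<lambda>i\<in>I. p1 i (\<psi> i)) * C' (\<lambda>i\<in>I. p2 i (\<psi> i)))"
      by (rule insert.IH[rule_format]) (use finM finN fnn Xnn sw' in auto)
    also have "\<dots> \<le> (\<Sum>\<psi>\<in>PiE I N. (\<Prod>i\<in>I. X i (\<psi> i)) *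
         (\<Sum>r\<in>N k. X k r * C ((\<lambda>i\<in>I. p1 i (\<psi> i))(k:=p1 k r)) * C ((\<lambda>i\<in>I. p2 i (\<psi> i))(k:=p2 k r))))"
    proof (intro sum_mono)
      fix \<psi> assume \<psi>: "\<psi> \<in> PiE I N"
      have nn: "0 \<le> (\<Prod>i\<in>I. X i (\<psi> i))" using \<psi> Xnn by (intro prod_nonneg) auto
      have "C' (\<lambda>i\<in>I. p1 i (\<psi> i)) * C' (\<lambda>i\<in>I. p2 i (\<psi> i))
        \<le> (\<Sum>r\<in>N k. X k r * C ((\<lambda>i\<in>I. p1 i (\<psi> i))(k:=p1 k r)) * C ((\<lambda>i\<in>I. p2 i (\<psi> i))(k:=p2 k r)))"
        unfolding C'_def using sw by blast
      from mult_left_mono[OF this nn] show "(\<Prod>i\<in>I. X i (\<psi> i)) * C' (\<lambda>i\<in>I. p1 i (\<psi> i)) * C' (\<lambda>i\<in>I. p2 i (\<psi> i))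
         \<le> (\<Prod>i\<in>I. X i (\<psi> i)) * (\<Sum>r\<in>N k. X k r * C ((\<lambda>i\<in>I. p1 i (\<psi> i))(k:=p1 k r)) * C ((\<lambda>i\<in>I. p2 i (\<psi> i))(k:=p2 k r)))"
        by (simp add: mult.assoc)
    qed
    also have "\<dots> = (\<Sum>\<psi>\<in>PiE (insert k I) N. (\<Prod>i\<in>insert k I. X i (\<psi> i)) * C (\<lambda>i\<in>insert k I. p1 i (\<psi> i)) * C (\<lambda>i\<in>insert k I. p2 i (\<psi> i)))"
    proof -
      have "(\<Sum>\<psi>\<in>PiE (insert k I) N. (\<Prod>i\<in>insert k I. X i (\<psi> i)) * C (\<lambda>i\<in>insert k I. p1 i (\<psi> i)) * C (\<lambda>i\<in>insert k I. p2 i (\<psi> i)))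
        = (\<Sum>r\<in>N k. \<Sum>\<psi>\<in>PiE I N. (\<Prod>i\<in>insert k I. X i ((\<psi>(k:=r)) i)) * C (\<lambda>i\<in>insert k I. p1 i ((\<psi>(k:=r)) i)) * C (\<lambda>i\<in>insert k I. p2 i ((\<psi>(k:=r)) i)))"
        by (rule sum_PiE_insert[OF insert(2)])
      also have "\<dots> = (\<Sum>r\<in>N k. \<Sum>\<psi>\<in>PiE I N. (\<Prod>i\<in>I. X i (\<psi> i)) *
         (X k r * C ((\<lambda>i\<in>I. p1 i (\<psi> i))(k:=p1 k r)) * C ((\<lambda>i\<in>I. p2 i (\<psi> i))(k:=p2 k r))))"
      proof (intro sum.cong refl)
        fix r \<psi>
        have pr: "(\<Prod>i\<in>insert k I. X i ((\<psi>(k:=r)) i)) = X k r * (\<Prod>i\<in>I. X i (\<psi> i))"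
        proof -
          have "(\<Prod>i\<in>I. X i ((\<psi>(k:=r)) i)) = (\<Prod>i\<in>I. X i (\<psi> i))"
            using insert(2) by (intro prod.cong) auto
          then show ?thesis using insert(1,2) by simp
        qed
        have r1: "(\<lambda>i\<in>insert k I. p1 i ((\<psi>(k:=r)) i)) = (\<lambda>i\<in>I. p1 i (\<psi> i))(k:=p1 k r)"
          using insert(2) by (auto simp: fun_eq_iff restrict_def)
        have r2: "(\<lambda>i\<in>insert k I. p2 i ((\<psi>(k:=r)) i)) = (\<lambda>i\<in>I. p2 i (\<psi> i))(k:=p2 k r)"
          using insert(2) by (auto simp: fun_eq_iff restrict_def)
        show "(\<Prod>i\<in>insert k I. X i ((\<psi>(k:=r)) i)) * C (\<lambda>i\<in>insert k I. p1 i ((\<psi>(k:=r)) i)) * C (\<lambda>i\<in>insert k I. p2 i ((\<psi>(k:=r)) i))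
          = (\<Prod>i\<in>I. X i (\<psi> i)) * (X k r * C ((\<lambda>i\<in>I. p1 i (\<psi> i))(k:=p1 k r)) * C ((\<lambda>i\<in>I. p2 i (\<psi> i))(k:=p2 k r)))"
          unfolding pr r1 r2 by (simp add: algebra_simps)
      qed
      also have "\<dots> = (\<Sum>\<psi>\<in>PiE I N. (\<Prod>i\<in>I. X i (\<psi> i)) *
         (\<Sum>r\<in>N k. X k r * C ((\<lambda>i\<in>I. p1 i (\<psi> i))(k:=p1 k r)) * C ((\<lambda>i\<in>I. p2 i (\<psi> i))(k:=p2 k r))))"
        by (subst sum.swap) (simp add: sum_distrib_left)
      finally show ?thesis by simp
    qed
    finally show "(\<Sum>\<alpha>\<in>PiE (insert k I) M. (\<Prod>i\<in>insert k I. f i (\<alpha> i)) * C \<alpha>)\<^sup>2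
       \<le> (\<Sum>\<psi>\<in>PiE (insert k I) N. (\<Prod>i\<in>insert k I. X i (\<psi> i)) * C (\<lambda>i\<in>insert k I. p1 i (\<psi> i)) * C (\<lambda>i\<in>insert k I. p2 i (\<psi> i)))"
      unfolding L .
  qed
qed


lemma edge_val_eq:
  assumes sym: "\<forall>x y. G x y = G y x" and uv: "u \<noteq> v"
  shows "edge_val G \<phi> {u, v} = G (\<phi> u) (\<phi> v)"
  unfolding edge_val_def
proof (rule the_equality)
  show "\<exists>u' v'. u' \<noteq> v' \<and> {u, v} = {u', v'} \<and> G (\<phi> u) (\<phi> v) = G (\<phi> u') (\<phi> v')"
    using uv by blast
next
  fix w assume "\<exists>u' v'. u' \<noteq> v' \<and> {u, v} = {u', v'} \<and> w = G (\<phi> u') (\<phi> v')"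
  then obtain u' v' where "{u, v} = {u', v'}" "w = G (\<phi> u') (\<phi> v')" by blast
  then show "w = G (\<phi> u) (\<phi> v)" using sym by (auto simp: doubleton_eq_iff)
qed

lemma card2_obtain:
  assumes "card e = 2" obtains u v where "e = {u, v}" "u \<noteq> v"
  using assms by (auto simp: card_2_iff)

lemma edge_val_cong:
  assumes sym: "\<forall>x y. G x y = G y x" and "card e = 2" and "\<forall>x\<in>e. \<phi> x = \<phi>' x"
  shows "edge_val G \<phi> e = edge_val G \<phi>' e"
proof -
  obtain u v where e: "e = {u, v}" and uv: "u \<noteq> v" using assms(2) by (rule card2_obtain)
  then show ?thesis using assms(3) edge_val_eq[OF sym uv, of \<phi>] edge_val_eq[OF sym uv, of \<phi>'] by simp
qed

lemma edge_val_nonneg: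
  assumes sym: "\<forall>x y. G x y = G y x" and nn: "\<forall>x y. 0 \<le> G x y" and "card e = 2"
  shows "0 \<le> edge_val G \<phi> e"
proof -
  obtain u v where e: "e = {u, v}" and uv: "u \<noteq> v" using assms(3) by (rule card2_obtain)
  then show ?thesis using nn edge_val_eq[OF sym uv, of \<phi>] by simp
qed

definition tG :: "('g \<Rightarrow> 'g \<Rightarrow> real) \<Rightarrow> 'g \<times> 'g \<Rightarrow> 'g \<times> 'g \<Rightarrow> real" where
  "tG G p q = G (fst p) (snd q) * G (snd p) (fst q)"

lemma tG_sym: "\<forall>x y. G x y = G y x \<Longrightarrow> \<forall>x y. tG G x y = tG G y x"
  unfolding tG_def by (simp add: mult.commute)

lemma tG_nonneg: "\<forall>x y. 0 \<le> G x y \<Longrightarrow> \<forall>x y. 0 \<le> tG G x y"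
  unfolding tG_def by simp

definition pr :: "'v set \<Rightarrow> ('v \<times> bool \<Rightarrow> 'g) \<Rightarrow> 'v \<Rightarrow> 'g \<times> 'g" where
  "pr V \<Psi> = (\<lambda>u\<in>V. (\<Psi> (u, True), \<Psi> (u, False)))"

lemma pr_bij: "bij_betw (pr V) (V \<times> UNIV \<rightarrow>\<^sub>E (UNIV::'g set)) (V \<rightarrow>\<^sub>E UNIV)"
  for V :: "'v set"
proof (rule bij_betwI')
  fix x y :: "'v \<times> bool \<Rightarrow> 'g" assume x: "x \<in> V \<times> UNIV \<rightarrow>\<^sub>E UNIV" and y: "y \<in> V \<times> UNIV \<rightarrow>\<^sub>E UNIV"
  show "(pr V x = pr V y) = (x = y)"
  proof
    assume eq: "pr V x = pr V y"
    show "x = y"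
    proof
      fix z show "x z = y z"
      proof (cases z)
        case (Pair u b)
        show ?thesis
        proof (cases "u \<in> V")
          case True
          then have "x (u, True) = y (u, True) \<and> x (u, False) = y (u, False)"
            using fun_cong[OF eq, of u] by (simp add: pr_def)
          then show ?thesis using Pair by (cases b) auto
        next
          case False
          then show ?thesis using x y Pair by (auto simp: PiE_def extensional_def)
        qed
      qed
    qed
  qed simp
next
  fix x :: "'v \<times> bool \<Rightarrow> 'g" show "x \<in> V \<times> UNIV \<rightarrow>\<^sub>E UNIV \<Longrightarrow> pr V x \<in> V \<rightarrow>\<^sub>E UNIV" by (simp add: pr_def)
next
  fix y assume y: "y \<in> V \<rightarrow>\<^sub>E (UNIV :: ('g \<times> 'g) set)"
  define x where "x = (\<lambda>(u, b)\<in>V \<times> UNIV. if b then fst (y u) else snd (y u))"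
  have "x \<in> V \<times> UNIV \<rightarrow>\<^sub>E UNIV" by (simp add: x_def)
  moreover have "y = pr V x"
  proof
    fix u show "y u = pr V x u"
      using y by (cases "u \<in> V") (auto simp: pr_def x_def PiE_def extensional_def)
  qed
  ultimately show "\<exists>x\<in>V \<times> UNIV \<rightarrow>\<^sub>E UNIV. y = pr V x" by blast
qed

lemma tensor_single:
  assumes "u \<noteq> v"
  shows "tensorK2_E {{u, v}} = {{(u, True), (v, False)}, {(u, False), (v, True)}}"
  using assms unfolding tensorK2_E_def by (auto simp: doubleton_eq_iff)

lemma tensor_prod:
  assumes sym: "\<forall>x y. G x y = G y x" and fin: "finite E"
    and E: "\<forall>e\<in>E. card e = 2 \<and> e \<subseteq> V"
  shows "(\<Prod>t\<in>tensorK2_E E. edge_val G \<Psi> t) = (\<Prod>e\<in>E. edge_val (tG G) (pr V \<Psi>) e)"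
proof -
  have U: "tensorK2_E E = (\<Union>e\<in>E. tensorK2_E {e})"
    unfolding tensorK2_E_def by blast
  have fst_im: "t \<in> tensorK2_E {e} \<Longrightarrow> fst ` t = e" for t e
    unfolding tensorK2_E_def by auto
  have "(\<Prod>t\<in>tensorK2_E E. edge_val G \<Psi> t) = (\<Prod>e\<in>E. \<Prod>t\<in>tensorK2_E {e}. edge_val G \<Psi> t)"
    unfolding U
  proof (rule prod.UNION_disjoint[OF fin])
    show "\<forall>e\<in>E. finite (tensorK2_E {e})"
    proof
      fix e assume "e \<in> E"
      then obtain u v where "e = {u, v}" and uv: "u \<noteq> v" using E card2_obtain by metis
      then show "finite (tensorK2_E {e})" using tensor_single[OF uv] by simp
    qed
    show "\<forall>i\<in>E. \<forall>j\<in>E. i \<noteq> j \<longrightarrow> tensorK2_E {i} \<inter> tensorK2_E {j} = {}"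
      using fst_im by blast
  qed
  also have "\<dots> = (\<Prod>e\<in>E. edge_val (tG G) (pr V \<Psi>) e)"
  proof (rule prod.cong[OF refl])
    fix e assume "e \<in> E"
    then obtain u v where e: "e = {u, v}" "u \<noteq> v" and uv: "u \<in> V" "v \<in> V" using E card2_obtain
      by (metis insert_subset)
    have ne: "{(u, True), (v, False)} \<noteq> {(u, False), (v, True)}"
      using e(2) by (auto simp: doubleton_eq_iff)
    show "(\<Prod>t\<in>tensorK2_E {e}. edge_val G \<Psi> t) = edge_val (tG G) (pr V \<Psi>) e"
      using e uv ne
      by (simp add: tensor_single edge_val_eq[OF sym] edge_val_eq[OF tG_sym[OF sym]] tG_def pr_def)
  qed
  finally show ?thesis .
qed

lemma hom_tensor:
  fixes G :: "'g::finite \<Rightarrow> 'g \<Rightarrow> real"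
  assumes sym: "\<forall>x y. G x y = G y x" and gr: "graph V E"
  shows "hom (tensorK2_V V) (tensorK2_E E) G = hom V E (tG G)"
proof -
  have finE: "finite E"
    using gr unfolding graph_def by (meson Pow_iff finite_Pow_iff finite_subset subsetI)
  have E: "\<forall>e\<in>E. card e = 2 \<and> e \<subseteq> V" using gr unfolding graph_def by blast
  have "hom (tensorK2_V V) (tensorK2_E E) G = (\<Sum>\<Psi>\<in>V \<times> UNIV \<rightarrow>\<^sub>E UNIV. \<Prod>e\<in>E. edge_val (tG G) (pr V \<Psi>) e)"
    unfolding hom_def tensorK2_V_def using tensor_prod[OF sym finE E] by simp
  also have "\<dots> = hom V E (tG G)"
    unfolding hom_def by (rule sum.reindex_bij_betw[OF pr_bij])
  finally show ?thesis .
qed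

lemma hom_cross_eq:
  fixes G :: "'g::finite \<Rightarrow> 'g \<Rightarrow> real"
  assumes sym: "\<forall>x y. G x y = G y x" and gr: "graph V E"
  shows "hom_cross V E G a b = (\<Sum>q\<in>V \<rightarrow>\<^sub>E UNIV. (\<Prod>e\<in>E. edge_val (tG G) q e) * (\<Prod>u\<in>V. a (fst (q u)) * b (snd (q u))))"
proof -
  have finE: "finite E"
    using gr unfolding graph_def by (meson Pow_iff finite_Pow_iff finite_subset subsetI)
  have E: "\<forall>e\<in>E. card e = 2 \<and> e \<subseteq> V" using gr unfolding graph_def by blast
  have "hom_cross V E G a b = (\<Sum>\<Psi>\<in>V \<times> UNIV \<rightarrow>\<^sub>E UNIV. (\<Prod>e\<in>E. edge_val (tG G) (pr V \<Psi>) e) *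
       (\<Prod>u\<in>V. a (fst (pr V \<Psi> u)) * b (snd (pr V \<Psi> u))))"
    unfolding hom_cross_def tensorK2_V_def using tensor_prod[OF sym finE E]
    by (intro sum.cong refl arg_cong2[where f="(*)"] prod.cong) (auto simp: pr_def)
  also have "\<dots> = (\<Sum>q\<in>V \<rightarrow>\<^sub>E UNIV. (\<Prod>e\<in>E. edge_val (tG G) q e) * (\<Prod>u\<in>V. a (fst (q u)) * b (snd (q u))))"
    by (rule sum.reindex_bij_betw[OF pr_bij, where g="\<lambda>q. (\<Prod>e\<in>E. edge_val (tG G) q e) * (\<Prod>u\<in>V. a (fst (q u)) * b (snd (q u)))"])
  finally show ?thesis .
qed


definition famC :: "'f set \<Rightarrow> ('f \<Rightarrow> 'h set) \<Rightarrow> ('f \<times> 'h \<Rightarrow> 'a) \<Rightarrow> 'f \<Rightarrow> 'h \<Rightarrow> 'a" where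
  "famC I Z \<Phi> = (\<lambda>i\<in>I. \<lambda>x\<in>Z i. \<Phi> (i, x))"

lemma famC_bij: "bij_betw (famC I Z) (Sigma I Z \<rightarrow>\<^sub>E (UNIV::'a set)) (PiE I (\<lambda>i. Z i \<rightarrow>\<^sub>E UNIV))"
proof (rule bij_betwI')
  fix x y :: "_ \<Rightarrow> 'a" assume x: "x \<in> Sigma I Z \<rightarrow>\<^sub>E UNIV" and y: "y \<in> Sigma I Z \<rightarrow>\<^sub>E UNIV"
  show "(famC I Z x = famC I Z y) = (x = y)"
  proof
    assume eq: "famC I Z x = famC I Z y"
    show "x = y"
    proof
      fix z show "x z = y z"
      proof (cases z)
        case (Pair i u)
        show ?thesis
        proof (cases "i \<in> I \<and> u \<in> Z i")
          case True
          then show ?thesis using fun_cong[OF fun_cong[OF eq, of i], of u] Pair by (simp add: famC_def)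
        next
          case False
          then show ?thesis using x y Pair by (auto simp: PiE_def extensional_def)
        qed
      qed
    qed
  qed simp
next
  fix x :: "_ \<Rightarrow> 'a" show "x \<in> Sigma I Z \<rightarrow>\<^sub>E UNIV \<Longrightarrow> famC I Z x \<in> PiE I (\<lambda>i. Z i \<rightarrow>\<^sub>E UNIV)"
    by (simp add: famC_def)
next
  fix y assume y: "y \<in> PiE I (\<lambda>i. Z i \<rightarrow>\<^sub>E (UNIV::'a set))"
  define x where "x = (\<lambda>(i, u)\<in>Sigma I Z. y i u)"
  have "x \<in> Sigma I Z \<rightarrow>\<^sub>E UNIV" by (simp add: x_def)
  moreover have "y = famC I Z x"
  proof
    fix i show "y i = famC I Z x i"
    proof (cases "i \<in> I")
      case True
      then have "y i \<in> Z i \<rightarrow>\<^sub>E UNIV" using y by auto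
      then show ?thesis using True by (auto simp: famC_def x_def PiE_def extensional_def fun_eq_iff)
    next
      case False then show ?thesis using y by (auto simp: famC_def PiE_def extensional_def)
    qed
  qed
  ultimately show "\<exists>x\<in>Sigma I Z \<rightarrow>\<^sub>E UNIV. y = famC I Z x" by blast
qed

lemma D_facts:
  assumes "graph VF EF" "\<forall>e\<in>EF. card (e \<inter> A) = 1" "(j, k) \<in> {(j, k). {j, k} \<in> EF \<and> j \<in> A}"
  shows "j \<in> VF \<and> k \<in> VF \<and> j \<noteq> k \<and> j \<in> A \<and> k \<notin> A"
proof -
  have e: "{j, k} \<in> EF" "j \<in> A" using assms(3) by auto
  then have "{j, k} \<subseteq> VF" "card {j, k} = 2" using assms(1) unfolding graph_def by auto
  then have jk: "j \<in> VF" "k \<in> VF" "j \<noteq> k" by (auto simp: card_2_iff doubleton_eq_iff)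
  have "k \<notin> A"
  proof
    assume "k \<in> A"
    then have "{j, k} \<inter> A = {j, k}" using e by auto
    then show False using assms(2) e jk by auto
  qed
  then show ?thesis using jk e by blast
qed

lemma finite_graph_E: "graph V E \<Longrightarrow> finite E"
  unfolding graph_def by (meson Pow_iff finite_Pow_iff finite_subset subsetI)

lemma blowup_prod:
  fixes G' :: "'c \<Rightarrow> 'c \<Rightarrow> real" and VF :: "'f set" and HV :: "'f \<Rightarrow> 'h set"
  assumes sym: "\<forall>x y. G' x y = G' y x" and gF: "graph VF EF"
    and gH: "\<forall>i\<in>VF. graph (HV i) (HE i)" and bip: "\<forall>e\<in>EF. card (e \<inter> A) = 1"
  shows "(\<Prod>e\<in>blowup_E VF EF HV HE. edge_val G' \<Phi> e)
    = (\<Prod>i\<in>VF. \<Prod>e\<in>HE i. edge_val G' (famC VF HV \<Phi> i) e)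
      * (\<Prod>(j, k)\<in>{(j, k). {j, k} \<in> EF \<and> j \<in> A}. \<Prod>x\<in>HV j. \<Prod>y\<in>HV k. G' (\<Phi> (j, x)) (\<Phi> (k, y)))"
proof -
  define D where "D = {(j, k). {j, k} \<in> EF \<and> j \<in> A}"
  have Df: "(j, k) \<in> D \<Longrightarrow> j \<in> VF \<and> k \<in> VF \<and> j \<noteq> k \<and> j \<in> A \<and> k \<notin> A" for j k
    using D_facts[OF gF bip] unfolding D_def by blast
  have finVF: "finite VF" using gF by (simp add: graph_def)
  have finHV: "\<forall>i\<in>VF. finite (HV i)" using gH by (simp add: graph_def)
  have finHE: "\<forall>i\<in>VF. finite (HE i)" using gH finite_graph_E by blast
  have HEc: "i \<in> VF \<Longrightarrow> e \<in> HE i \<Longrightarrow> card e = 2 \<and> e \<subseteq> HV i" for i e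
    using gH unfolding graph_def by blast
  have finD: "finite D"
  proof (rule finite_subset[of _ "VF \<times> VF"])
    show "D \<subseteq> VF \<times> VF" using Df by auto
  qed (use finVF in simp)
  define S1 where "S1 = Sigma VF HE"
  define S2 where "S2 = Sigma D (\<lambda>(j, k). HV j \<times> HV k)"
  define h1 where "h1 = (\<lambda>(i::'f, e::'h set). Pair i ` e)"
  define h2 where "h2 = (\<lambda>((j::'f, k::'f), (x::'h, y::'h)). {(j, x), (k, y)})"
  have finS1: "finite S1" unfolding S1_def using finVF finHE by auto
  have finHV2: "\<forall>z\<in>D. finite ((\<lambda>(j, k). HV j \<times> HV k) z)"
  proof
    fix z assume "z \<in> D"
    then obtain j k where "z = (j, k)" "(j, k) \<in> D" by (cases z) auto
    then show "finite ((\<lambda>(j, k). HV j \<times> HV k) z)" using Df[of j k] finHV by auto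
  qed
  have finS2: "finite S2" unfolding S2_def using finD finHV2 by (intro finite_SigmaI) auto
  have BE: "blowup_E VF EF HV HE = h1 ` S1 \<union> h2 ` S2"
  proof (rule set_eqI, rule iffI)
    fix t assume "t \<in> blowup_E VF EF HV HE"
    then consider (a) i x y where "t = {(i, x), (i, y)}" "i \<in> VF" "{x, y} \<in> HE i"
      | (b) i j x y where "t = {(i, x), (j, y)}" "{i, j} \<in> EF" "x \<in> HV i" "y \<in> HV j"
      unfolding blowup_E_def by blast
    then show "t \<in> h1 ` S1 \<union> h2 ` S2"
    proof cases
      case a
      then have "t = h1 (i, {x, y})" "(i, {x, y}) \<in> S1" unfolding h1_def S1_def by auto
      then show ?thesis by blast
    next
      case b
      have "card ({i, j} \<inter> A) = 1" using bip b by blast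
      then have "i \<in> A \<or> j \<in> A" by (cases "i \<in> A"; cases "j \<in> A") auto
      then show ?thesis
      proof
        assume "i \<in> A"
        then have "t = h2 ((i, j), (x, y))" "((i, j), (x, y)) \<in> S2"
          using b unfolding h2_def S2_def D_def by auto
        then show ?thesis by blast
      next
        assume "j \<in> A"
        moreover have "{j, i} = {i, j}" by auto
        ultimately have "t = h2 ((j, i), (y, x))" "((j, i), (y, x)) \<in> S2"
          using b unfolding h2_def S2_def D_def by auto
        then show ?thesis by blast
      qed
    qed
  next
    fix t assume "t \<in> h1 ` S1 \<union> h2 ` S2"
    then show "t \<in> blowup_E VF EF HV HE"
    proof
      assume "t \<in> h1 ` S1"
      then obtain i e where ie: "i \<in> VF" "e \<in> HE i" "t = Pair i ` e" unfolding h1_def S1_def by auto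
      then obtain x y where "e = {x, y}" using HEc card2_obtain by metis
      then show ?thesis using ie unfolding blowup_E_def by auto
    next
      assume "t \<in> h2 ` S2"
      then obtain j k x y where "(j, k) \<in> D" "x \<in> HV j" "y \<in> HV k" "t = {(j, x), (k, y)}"
        unfolding h2_def S2_def by auto
      then show ?thesis unfolding blowup_E_def D_def by blast
    qed
  qed
  have disj: "h1 ` S1 \<inter> h2 ` S2 = {}"
  proof (rule ccontr)
    assume "h1 ` S1 \<inter> h2 ` S2 \<noteq> {}"
    then obtain i e j k x y where "(i, e) \<in> S1" and jk: "((j, k), (x, y)) \<in> S2" and eq: "Pair i ` e = {(j, x), (k, y)}"
      unfolding h1_def h2_def by auto
    have "(j, x) \<in> Pair i ` e" "(k, y) \<in> Pair i ` e" unfolding eq by simp_all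
    then have "j = i" "k = i" by auto
    moreover have "j \<noteq> k" using Df jk unfolding S2_def by auto
    ultimately show False by simp
  qed
  have inj1: "inj_on h1 S1"
  proof (rule inj_onI)
    fix a b assume a: "a \<in> S1" and b: "b \<in> S1" and eq: "h1 a = h1 b"
    obtain i e where a': "a = (i, e)" by (cases a)
    obtain i' e' where b': "b = (i', e')" by (cases b)
    have "e \<noteq> {}" "e' \<noteq> {}" using a b a' b' HEc unfolding S1_def by fastforce+
    then obtain z where z: "z \<in> e" by blast
    have eq': "Pair i ` e = Pair i' ` e'" using eq a' b' unfolding h1_def by simp
    have "(i, z) \<in> Pair i' ` e'" using z eq' by blast
    then have "i = i'" by blast
    then have "e = e'" using eq' by (simp add: inj_image_eq_iff inj_on_def)
    then show "a = b" using a' b' \<open>i = i'\<close> by simp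
  qed
  have inj2: "inj_on h2 S2"
  proof (rule inj_onI)
    fix a b assume a: "a \<in> S2" and b: "b \<in> S2" and eq: "h2 a = h2 b"
    obtain j k x y where a': "a = ((j, k), (x, y))" by (cases a) auto
    obtain j' k' x' y' where b': "b = ((j', k'), (x', y'))" by (cases b) auto
    have "(j, k) \<in> D" "(j', k') \<in> D" using a b a' b' unfolding S2_def by auto
    then have "j \<in> A" "k \<notin> A" "j' \<in> A" "k' \<notin> A" using Df by blast+
    then show "a = b" using eq a' b' unfolding h2_def by (auto simp: doubleton_eq_iff)
  qed
  have P1: "(\<Prod>e\<in>h1 ` S1. edge_val G' \<Phi> e) = (\<Prod>i\<in>VF. \<Prod>e\<in>HE i. edge_val G' (famC VF HV \<Phi> i) e)"
  proof -
    have "(\<Prod>e\<in>h1 ` S1. edge_val G' \<Phi> e) = (\<Prod>(i, e)\<in>S1. edge_val G' \<Phi> (Pair i ` e))"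
      using prod.reindex[OF inj1] unfolding h1_def by (simp add: case_prod_beta comp_def)
    also have "\<dots> = (\<Prod>i\<in>VF. \<Prod>e\<in>HE i. edge_val G' \<Phi> (Pair i ` e))"
      unfolding S1_def using prod.Sigma[OF finVF finHE, of "\<lambda>i e. edge_val G' \<Phi> (Pair i ` e)"] by simp
    also have "\<dots> = (\<Prod>i\<in>VF. \<Prod>e\<in>HE i. edge_val G' (famC VF HV \<Phi> i) e)"
    proof (intro prod.cong refl)
      fix i e assume i: "i \<in> VF" and e: "e \<in> HE i"
      obtain x y where xy: "e = {x, y}" "x \<noteq> y" using HEc[OF i e] card2_obtain by metis
      have "x \<in> HV i" "y \<in> HV i" using HEc[OF i e] xy by auto
      then show "edge_val G' \<Phi> (Pair i ` e) = edge_val G' (famC VF HV \<Phi> i) e"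
        using xy i edge_val_eq[OF sym, of "(i, x)" "(i, y)" \<Phi>] edge_val_eq[OF sym xy(2), of "famC VF HV \<Phi> i"]
        by (simp add: famC_def)
    qed
    finally show ?thesis .
  qed
  have P2: "(\<Prod>e\<in>h2 ` S2. edge_val G' \<Phi> e) = (\<Prod>(j, k)\<in>D. \<Prod>x\<in>HV j. \<Prod>y\<in>HV k. G' (\<Phi> (j, x)) (\<Phi> (k, y)))"
  proof -
    have "(\<Prod>e\<in>h2 ` S2. edge_val G' \<Phi> e) = (\<Prod>((j, k), (x, y))\<in>S2. edge_val G' \<Phi> {(j, x), (k, y)})"
      using prod.reindex[OF inj2] unfolding h2_def by (simp add: case_prod_beta comp_def)
    also have "\<dots> = (\<Prod>((j, k), (x, y))\<in>S2. G' (\<Phi> (j, x)) (\<Phi> (k, y)))"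
    proof (rule prod.cong[OF refl], clarify)
      fix j k x y assume "((j, k), (x, y)) \<in> S2"
      then have "(j, k) \<in> D" unfolding S2_def by auto
      then have "(j, x) \<noteq> (k, y)" using Df by auto
      then show "edge_val G' \<Phi> {(j, x), (k, y)} = G' (\<Phi> (j, x)) (\<Phi> (k, y))"
        by (rule edge_val_eq[OF sym])
    qed
    also have "\<dots> = (\<Prod>(j, k)\<in>D. \<Prod>(x, y)\<in>HV j \<times> HV k. G' (\<Phi> (j, x)) (\<Phi> (k, y)))"
      unfolding S2_def
      by (subst prod.Sigma[symmetric]) (use finD finHV2 in \<open>auto simp: case_prod_beta\<close>)
    also have "\<dots> = (\<Prod>(j, k)\<in>D. \<Prod>x\<in>HV j. \<Prod>y\<in>HV k. G' (\<Phi> (j, x)) (\<Phi> (k, y)))"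
      by (simp add: prod.cartesian_product case_prod_beta)
    finally show ?thesis .
  qed
  show ?thesis
    unfolding BE prod.union_disjoint[OF finite_imageI[OF finS1] finite_imageI[OF finS2] disj] P1 P2 D_def ..
qed


lemma hom_blowup:
  fixes G' :: "'c::finite \<Rightarrow> 'c \<Rightarrow> real" and VF :: "'f set" and HV :: "'f \<Rightarrow> 'h set"
  assumes sym: "\<forall>x y. G' x y = G' y x" and gF: "graph VF EF"
    and gH: "\<forall>i\<in>VF. graph (HV i) (HE i)" and bip: "\<forall>e\<in>EF. card (e \<inter> A) = 1"
  shows "hom (blowup_V VF HV) (blowup_E VF EF HV HE) G'
    = (\<Sum>\<alpha>\<in>PiE VF (\<lambda>i. HV i \<rightarrow>\<^sub>E UNIV). (\<Prod>i\<in>VF. \<Prod>e\<in>HE i. edge_val G' (\<alpha> i) e)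
      * (\<Prod>(j, k)\<in>{(j, k). {j, k} \<in> EF \<and> j \<in> A}. \<Prod>x\<in>HV j. \<Prod>y\<in>HV k. G' (\<alpha> j x) (\<alpha> k y)))"
proof -
  define D where "D = {(j, k). {j, k} \<in> EF \<and> j \<in> A}"
  have Df: "(j, k) \<in> D \<Longrightarrow> j \<in> VF \<and> k \<in> VF \<and> j \<noteq> k \<and> j \<in> A \<and> k \<notin> A" for j k
    using D_facts[OF gF bip] unfolding D_def by blast
  define F where "F = (\<lambda>\<alpha>::'f \<Rightarrow> 'h \<Rightarrow> 'c. (\<Prod>i\<in>VF. \<Prod>e\<in>HE i. edge_val G' (\<alpha> i) e)
      * (\<Prod>(j, k)\<in>D. \<Prod>x\<in>HV j. \<Prod>y\<in>HV k. G' (\<alpha> j x) (\<alpha> k y)))"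
  have "hom (blowup_V VF HV) (blowup_E VF EF HV HE) G' = (\<Sum>\<Phi>\<in>Sigma VF HV \<rightarrow>\<^sub>E UNIV. F (famC VF HV \<Phi>))"
    unfolding hom_def blowup_V_def
  proof (rule sum.cong[OF refl])
    fix \<Phi> :: "'f \<times> 'h \<Rightarrow> 'c"
    have "(\<Prod>(j, k)\<in>D. \<Prod>x\<in>HV j. \<Prod>y\<in>HV k. G' (\<Phi> (j, x)) (\<Phi> (k, y)))
       = (\<Prod>(j, k)\<in>D. \<Prod>x\<in>HV j. \<Prod>y\<in>HV k. G' (famC VF HV \<Phi> j x) (famC VF HV \<Phi> k y))"
    proof (rule prod.cong[OF refl], clarify)
      fix j k assume "(j, k) \<in> D"
      then have "j \<in> VF" "k \<in> VF" using Df by auto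
      then show "(\<Prod>x\<in>HV j. \<Prod>y\<in>HV k. G' (\<Phi> (j, x)) (\<Phi> (k, y))) =
         (\<Prod>x\<in>HV j. \<Prod>y\<in>HV k. G' (famC VF HV \<Phi> j x) (famC VF HV \<Phi> k y))"
        by (intro prod.cong refl) (simp add: famC_def)
    qed
    then show "(\<Prod>e\<in>blowup_E VF EF HV HE. edge_val G' \<Phi> e) = F (famC VF HV \<Phi>)"
      unfolding blowup_prod[OF sym gF gH bip] F_def D_def by simp
  qed
  also have "\<dots> = (\<Sum>\<alpha>\<in>PiE VF (\<lambda>i. HV i \<rightarrow>\<^sub>E UNIV). F \<alpha>)"
    by (rule sum.reindex_bij_betw[OF famC_bij])
  finally show ?thesis unfolding F_def D_def .
qed

lemma factor:
  fixes G :: "'g \<Rightarrow> 'g \<Rightarrow> real" and \<alpha> :: "'f \<Rightarrow> 'h \<Rightarrow> 'g"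
  assumes nn: "\<forall>x y. 0 \<le> G x y" and Dne: "\<forall>(j, k)\<in>D. j \<noteq> k"
  shows "\<exists>K a. 0 \<le> K \<and> (\<forall>g. 0 \<le> a g) \<and> (\<forall>p.
     (\<Prod>(j, k)\<in>D. \<Prod>x\<in>HV j. \<Prod>y\<in>HV k. G ((\<alpha>(i:=p)) j x) ((\<alpha>(i:=p)) k y)) = K * (\<Prod>z\<in>HV i. a (p z)))"
proof -
  define Kt where "Kt = (\<lambda>(j, k). if j \<noteq> i \<and> k \<noteq> i then (\<Prod>x\<in>HV j. \<Prod>y\<in>HV k. G (\<alpha> j x) (\<alpha> k y)) else 1)"
  define At where "At = (\<lambda>g (j, k). if j = i then (\<Prod>y\<in>HV k. G g (\<alpha> k y)) else 1)"
  define Bt where "Bt = (\<lambda>g (j, k). if k = i then (\<Prod>x\<in>HV j. G (\<alpha> j x) g) else 1)"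
  define K where "K = (\<Prod>jk\<in>D. Kt jk)"
  define a where "a = (\<lambda>g. \<Prod>jk\<in>D. At g jk * Bt g jk)"
  have "0 \<le> K" unfolding K_def Kt_def using nn by (auto intro!: prod_nonneg)
  moreover have "\<forall>g. 0 \<le> a g" unfolding a_def At_def Bt_def using nn by (auto intro!: prod_nonneg mult_nonneg_nonneg)
  moreover have "\<forall>p. (\<Prod>(j, k)\<in>D. \<Prod>x\<in>HV j. \<Prod>y\<in>HV k. G ((\<alpha>(i:=p)) j x) ((\<alpha>(i:=p)) k y)) = K * (\<Prod>z\<in>HV i. a (p z))"
  proof
    fix p
    have "K * (\<Prod>z\<in>HV i. a (p z)) = (\<Prod>jk\<in>D. Kt jk) * (\<Prod>jk\<in>D. (\<Prod>z\<in>HV i. At (p z) jk) * (\<Prod>z\<in>HV i. Bt (p z) jk))"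
      unfolding K_def a_def by (subst prod.swap) (simp add: prod.distrib)
    also have "\<dots> = (\<Prod>jk\<in>D. Kt jk * ((\<Prod>z\<in>HV i. At (p z) jk) * (\<Prod>z\<in>HV i. Bt (p z) jk)))"
      by (simp add: prod.distrib)
    also have "\<dots> = (\<Prod>(j, k)\<in>D. \<Prod>x\<in>HV j. \<Prod>y\<in>HV k. G ((\<alpha>(i:=p)) j x) ((\<alpha>(i:=p)) k y))"
    proof (rule prod.cong[OF refl], clarify)
      fix j k assume "(j, k) \<in> D"
      then have jk: "j \<noteq> k" using Dne by auto
      show "Kt (j, k) * ((\<Prod>z\<in>HV i. At (p z) (j, k)) * (\<Prod>z\<in>HV i. Bt (p z) (j, k))) =
         (\<Prod>x\<in>HV j. \<Prod>y\<in>HV k. G ((\<alpha>(i:=p)) j x) ((\<alpha>(i:=p)) k y))"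
      proof (cases "j = i")
        case True
        then show ?thesis using jk by (simp add: Kt_def At_def Bt_def)
      next
        case False
        show ?thesis
        proof (cases "k = i")
          case True
          then show ?thesis using False jk by (simp add: Kt_def At_def Bt_def prod.swap[of _ "HV i"])
        next
          case False2: False
          then show ?thesis using False by (simp add: Kt_def At_def Bt_def)
        qed
      qed
    qed
    finally show "(\<Prod>(j, k)\<in>D. \<Prod>x\<in>HV j. \<Prod>y\<in>HV k. G ((\<alpha>(i:=p)) j x) ((\<alpha>(i:=p)) k y)) = K * (\<Prod>z\<in>HV i. a (p z))"
      by simp
  qed
  ultimately show ?thesis by blast
qed


lemma blowup_graph:
  assumes gF: "graph VF EF" and gH: "\<forall>i\<in>VF. graph (HV i) (HE i)"
  shows "graph (blowup_V VF HV) (blowup_E VF EF HV HE)"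
  unfolding graph_def
proof
  show "finite (blowup_V VF HV)" using gF gH unfolding blowup_V_def graph_def by auto
  show "\<forall>e\<in>blowup_E VF EF HV HE. e \<subseteq> blowup_V VF HV \<and> card e = 2"
  proof
    fix t assume "t \<in> blowup_E VF EF HV HE"
    then consider (a) i x y where "t = {(i, x), (i, y)}" "i \<in> VF" "{x, y} \<in> HE i"
      | (b) i j x y where "t = {(i, x), (j, y)}" "{i, j} \<in> EF" "x \<in> HV i" "y \<in> HV j"
      unfolding blowup_E_def by blast
    then show "t \<subseteq> blowup_V VF HV \<and> card t = 2"
    proof cases
      case a
      from gH a(2,3) have c: "{x, y} \<subseteq> HV i \<and> card {x, y} = 2" unfolding graph_def by blast
      then have "x \<noteq> y" by (cases "x = y") auto
      then show ?thesis using a c unfolding blowup_V_def by auto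
    next
      case b
      from gF b(2) have c: "{i, j} \<subseteq> VF \<and> card {i, j} = 2" unfolding graph_def by blast
      then have "i \<noteq> j" by (cases "i = j") auto
      then show ?thesis using b c unfolding blowup_V_def by auto
    qed
  qed
qed

theorem theorem5p4:
  fixes G :: "'g::finite \<Rightarrow> 'g \<Rightarrow> real"
    and VF :: "'f set" and EF :: "'f set set"
    and HV :: "'f \<Rightarrow> 'h set" and HE :: "'f \<Rightarrow> 'h set set"
  assumes "weighted_graph G"
    and "graph VF EF" and "bipartite VF EF"
    and "\<And>i. i \<in> VF \<Longrightarrow> graph (HV i) (HE i)"
    and "\<And>i. i \<in> VF \<Longrightarrow> wcb_swapping (HV i) (HE i) G"
  shows "bipartite_swapping (blowup_V VF HV) (blowup_E VF EF HV HE) G"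
proof -
  have sym: "\<forall>x y. G x y = G y x" and nn: "\<forall>x y. 0 \<le> G x y"
    using assms(1) unfolding weighted_graph_def by auto
  have gF: "graph VF EF" by fact
  have gH: "\<forall>i\<in>VF. graph (HV i) (HE i)" using assms(4) by blast
  have wcb: "\<forall>i\<in>VF. wcb_swapping (HV i) (HE i) G" using assms(5) by blast
  obtain A where bip: "\<forall>e\<in>EF. card (e \<inter> A) = 1" using assms(3) unfolding bipartite_def by blast
  define D where "D = {(j, k). {j, k} \<in> EF \<and> j \<in> A}"
  have Df: "(j, k) \<in> D \<Longrightarrow> j \<in> VF \<and> k \<in> VF \<and> j \<noteq> k \<and> j \<in> A \<and> k \<notin> A" for j k
    using D_facts[OF gF bip] unfolding D_def by blast
  have Dne: "\<forall>(j, k)\<in>D. j \<noteq> k" using Df by auto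
  have finVF: "finite VF" using gF by (simp add: graph_def)
  have finHV: "\<forall>i\<in>VF. finite (HV i)" using gH by (simp add: graph_def)
  have HEc: "i \<in> VF \<Longrightarrow> e \<in> HE i \<Longrightarrow> card e = 2 \<and> e \<subseteq> HV i" for i e
    using gH unfolding graph_def by blast
  define M where "M = (\<lambda>i. HV i \<rightarrow>\<^sub>E (UNIV :: 'g set))"
  define N where "N = (\<lambda>i. HV i \<rightarrow>\<^sub>E (UNIV :: ('g \<times> 'g) set))"
  define f where "f = (\<lambda>i p. \<Prod>e\<in>HE i. edge_val G p e)"
  define X where "X = (\<lambda>i q. \<Prod>e\<in>HE i. edge_val (tG G) q e)"
  define p1 where "p1 = (\<lambda>i (q :: 'h \<Rightarrow> 'g \<times> 'g). \<lambda>z\<in>HV i. if i \<in> A then fst (q z) else snd (q z))"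
  define p2 where "p2 = (\<lambda>i (q :: 'h \<Rightarrow> 'g \<times> 'g). \<lambda>z\<in>HV i. if i \<in> A then snd (q z) else fst (q z))"
  define Cf where "Cf = (\<lambda>\<alpha> :: 'f \<Rightarrow> 'h \<Rightarrow> 'g. \<Prod>(j, k)\<in>D. \<Prod>x\<in>HV j. \<Prod>y\<in>HV k. G (\<alpha> j x) (\<alpha> k y))"
  have hyb: "(\<Sum>\<alpha>\<in>PiE VF M. (\<Prod>i\<in>VF. f i (\<alpha> i)) * Cf \<alpha>)\<^sup>2
       \<le> (\<Sum>\<psi>\<in>PiE VF N. (\<Prod>i\<in>VF. X i (\<psi> i)) * Cf (\<lambda>i\<in>VF. p1 i (\<psi> i)) * Cf (\<lambda>i\<in>VF. p2 i (\<psi> i)))"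
  proof -
    have h1: "\<forall>i\<in>VF. finite (M i)" using finHV unfolding M_def by (auto intro: finite_PiE)
    have h2: "\<forall>i\<in>VF. finite (N i)" using finHV unfolding N_def by (auto intro: finite_PiE)
    have h3: "\<forall>i\<in>VF. \<forall>p\<in>M i. 0 \<le> f i p"
      unfolding f_def
    proof (intro ballI prod_nonneg)
      fix i p e assume "i \<in> VF" "p \<in> M i" "e \<in> HE i"
      then show "0 \<le> edge_val G p e" using HEc edge_val_nonneg[OF sym nn] by blast
    qed
    have h4: "\<forall>i\<in>VF. \<forall>q\<in>N i. 0 \<le> X i q"
      unfolding X_def
    proof (intro ballI prod_nonneg)
      fix i q e assume "i \<in> VF" "q \<in> N i" "e \<in> HE i"
      then show "0 \<le> edge_val (tG G) q e" using HEc edge_val_nonneg[OF tG_sym[OF sym] tG_nonneg[OF nn]] by blast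
    qed
    have h5: "\<forall>i\<in>VF. \<forall>\<alpha> \<beta>. (\<Sum>p\<in>M i. f i p * Cf (\<alpha>(i:=p))) * (\<Sum>p\<in>M i. f i p * Cf (\<beta>(i:=p)))
        \<le> (\<Sum>q\<in>N i. X i q * Cf (\<alpha>(i:=p1 i q)) * Cf (\<beta>(i:=p2 i q)))"
    proof (intro ballI allI)
      fix i \<alpha> \<beta> assume i: "i \<in> VF"
      obtain Ka a where Ka: "0 \<le> Ka" "\<forall>g. 0 \<le> a g" and ea: "\<forall>p. Cf (\<alpha>(i:=p)) = Ka * (\<Prod>z\<in>HV i. a (p z))"
        using factor[OF nn Dne, where HV=HV and \<alpha>=\<alpha> and i=i] unfolding Cf_def by blast
      obtain Kb b where Kb: "0 \<le> Kb" "\<forall>g. 0 \<le> b g" and eb: "\<forall>p. Cf (\<beta>(i:=p)) = Kb * (\<Prod>z\<in>HV i. b (p z))"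
        using factor[OF nn Dne, where HV=HV and \<alpha>=\<beta> and i=i] unfolding Cf_def by blast
      have gi: "graph (HV i) (HE i)" using gH i by blast
      have L: "(\<Sum>p\<in>M i. f i p * Cf (\<gamma>(i:=p))) = K * hom_w (HV i) (HE i) G c"
        if "\<forall>p. Cf (\<gamma>(i:=p)) = K * (\<Prod>z\<in>HV i. c (p z))" for \<gamma> K c
        using that unfolding hom_w_def M_def f_def by (simp add: sum_distrib_left algebra_simps)
      have LHS: "(\<Sum>p\<in>M i. f i p * Cf (\<alpha>(i:=p))) * (\<Sum>p\<in>M i. f i p * Cf (\<beta>(i:=p)))
         = (Ka * Kb) * (hom_w (HV i) (HE i) G a * hom_w (HV i) (HE i) G b)"
        using L[OF ea] L[OF eb] by simp
      have KK: "0 \<le> Ka * Kb" using Ka Kb by simp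
      have R0: "(\<Sum>q\<in>N i. X i q * Cf (\<alpha>(i:=p1 i q)) * Cf (\<beta>(i:=p2 i q)))
         = (Ka * Kb) * (\<Sum>q\<in>N i. X i q * ((\<Prod>z\<in>HV i. a (p1 i q z)) * (\<Prod>z\<in>HV i. b (p2 i q z))))"
        using ea eb by (simp add: sum_distrib_left algebra_simps)
      show "(\<Sum>p\<in>M i. f i p * Cf (\<alpha>(i:=p))) * (\<Sum>p\<in>M i. f i p * Cf (\<beta>(i:=p)))
        \<le> (\<Sum>q\<in>N i. X i q * Cf (\<alpha>(i:=p1 i q)) * Cf (\<beta>(i:=p2 i q)))"
      proof (cases "i \<in> A")
        case True
        have "(\<Sum>q\<in>N i. X i q * ((\<Prod>z\<in>HV i. a (p1 i q z)) * (\<Prod>z\<in>HV i. b (p2 i q z))))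
           = hom_cross (HV i) (HE i) G a b"
          unfolding hom_cross_eq[OF sym gi] N_def X_def p1_def p2_def using True
          by (intro sum.cong refl) (simp add: prod.distrib)
        moreover have "hom_w (HV i) (HE i) G a * hom_w (HV i) (HE i) G b \<le> hom_cross (HV i) (HE i) G a b"
          using wcb i Ka(2) Kb(2) unfolding wcb_swapping_def by blast
        ultimately show ?thesis unfolding LHS R0 using KK by (simp add: mult_left_mono)
      next
        case False
        have "(\<Sum>q\<in>N i. X i q * ((\<Prod>z\<in>HV i. a (p1 i q z)) * (\<Prod>z\<in>HV i. b (p2 i q z))))
           = hom_cross (HV i) (HE i) G b a"
          unfolding hom_cross_eq[OF sym gi] N_def X_def p1_def p2_def using False
          by (intro sum.cong refl) (simp add: prod.distrib mult.commute)
        moreover have "hom_w (HV i) (HE i) G b * hom_w (HV i) (HE i) G a \<le> hom_cross (HV i) (HE i) G b a"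
          using wcb i Ka(2) Kb(2) unfolding wcb_swapping_def by blast
        ultimately show ?thesis unfolding LHS R0 using KK by (simp add: mult_left_mono mult.commute)
      qed
    qed
    show ?thesis
      by (rule mp[OF mp[OF mp[OF mp[OF mp[OF hybrid_aux[OF finVF, THEN spec[where x=Cf]] h1] h2] h3] h4] h5])
  qed
  have E1: "hom (blowup_V VF HV) (blowup_E VF EF HV HE) G = (\<Sum>\<alpha>\<in>PiE VF M. (\<Prod>i\<in>VF. f i (\<alpha> i)) * Cf \<alpha>)"
    unfolding hom_blowup[OF sym gF gH bip] M_def f_def Cf_def D_def ..
  have E2: "hom (tensorK2_V (blowup_V VF HV)) (tensorK2_E (blowup_E VF EF HV HE)) G
     = (\<Sum>\<psi>\<in>PiE VF N. (\<Prod>i\<in>VF. X i (\<psi> i)) * Cf (\<lambda>i\<in>VF. p1 i (\<psi> i)) * Cf (\<lambda>i\<in>VF. p2 i (\<psi> i)))"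
  proof -
    have "hom (tensorK2_V (blowup_V VF HV)) (tensorK2_E (blowup_E VF EF HV HE)) G
       = hom (blowup_V VF HV) (blowup_E VF EF HV HE) (tG G)"
      by (rule hom_tensor[OF sym blowup_graph[OF gF gH]])
    also have "\<dots> = (\<Sum>\<psi>\<in>PiE VF N. (\<Prod>i\<in>VF. X i (\<psi> i)) *
        (\<Prod>(j, k)\<in>D. \<Prod>x\<in>HV j. \<Prod>y\<in>HV k. tG G (\<psi> j x) (\<psi> k y)))"
      unfolding hom_blowup[OF tG_sym[OF sym] gF gH bip] N_def X_def D_def ..
    also have "\<dots> = (\<Sum>\<psi>\<in>PiE VF N. (\<Prod>i\<in>VF. X i (\<psi> i)) * Cf (\<lambda>i\<in>VF. p1 i (\<psi> i)) * Cf (\<lambda>i\<in>VF. p2 i (\<psi> i)))"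
    proof (rule sum.cong[OF refl])
      fix \<psi> assume "\<psi> \<in> PiE VF N"
      have "(\<Prod>(j, k)\<in>D. \<Prod>x\<in>HV j. \<Prod>y\<in>HV k. tG G (\<psi> j x) (\<psi> k y))
         = (\<Prod>(j, k)\<in>D. \<Prod>x\<in>HV j. \<Prod>y\<in>HV k. G ((\<lambda>i\<in>VF. p1 i (\<psi> i)) j x) ((\<lambda>i\<in>VF. p1 i (\<psi> i)) k y)
             * G ((\<lambda>i\<in>VF. p2 i (\<psi> i)) j x) ((\<lambda>i\<in>VF. p2 i (\<psi> i)) k y))"
      proof (rule prod.cong[OF refl], clarify)
        fix j k assume "(j, k) \<in> D"
        then have jk: "j \<in> VF" "k \<in> VF" "j \<in> A" "k \<notin> A" using Df by auto
        show "(\<Prod>x\<in>HV j. \<Prod>y\<in>HV k. tG G (\<psi> j x) (\<psi> k y)) =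
          (\<Prod>x\<in>HV j. \<Prod>y\<in>HV k. G ((\<lambda>i\<in>VF. p1 i (\<psi> i)) j x) ((\<lambda>i\<in>VF. p1 i (\<psi> i)) k y)
             * G ((\<lambda>i\<in>VF. p2 i (\<psi> i)) j x) ((\<lambda>i\<in>VF. p2 i (\<psi> i)) k y))"
          using jk by (intro prod.cong refl) (simp add: tG_def p1_def p2_def)
      qed
      then show "(\<Prod>i\<in>VF. X i (\<psi> i)) * (\<Prod>(j, k)\<in>D. \<Prod>x\<in>HV j. \<Prod>y\<in>HV k. tG G (\<psi> j x) (\<psi> k y))
          = (\<Prod>i\<in>VF. X i (\<psi> i)) * Cf (\<lambda>i\<in>VF. p1 i (\<psi> i)) * Cf (\<lambda>i\<in>VF. p2 i (\<psi> i))"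
        unfolding Cf_def by (simp add: prod.distrib case_prod_beta)
    qed
    finally show ?thesis .
  qed
  show ?thesis
    unfolding bipartite_swapping_def E1 E2 by (rule hyb)
qed

end
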